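(* Let $M\in\mathbb{R}^{n\times n}$, $q\in\mathbb{R}^n$, $r\ge 2$, and let $f_r$, $\mathrm{sol}(M,q)$, $\mathrm{fea}(M,q)$ and $\mathcal{G}_f$ be as in the context. Then: 1) If $M$ is positive semidefinite and $\mathrm{fea}(M,q)$ is nonempty, then $\mathrm{sol}(M,q)=\mathcal{G}_f$ and this set is nonempty. 2) If $M$ is a P-matrix, then $\mathrm{sol}(M,q)=\mathcal{G}_f=\{x^*\}$, where $x^*$ is the unique element of $\mathrm{sol}(M,q)$.
   Context: $f_r(x)=\frac1r\big[\langle x_+^r,(Mx+q)_+^r\rangle+\|x_-\|_r^r+\|(Mx+q)_-\|_r^r\big]$, where $a_+=\max\{a,0\}$, $a_-=\min\{a,0\}$ componentwise, $x_+^r$ is the componentwise $r$th power of $x_+$, and $\|z\|_r^r=\sum_i|z_i|^r$ (this function is continuously differentiable for $r\ge 2$). $\mathrm{sol}(M,q)=\{x\in\mathbb{R}^n: x\ge0,\ Mx+q\ge0,\ \langle x,Mx+q\rangle=0\}$; $\mathrm{fea}(M,q)=\{x\in\mathbb{R}^n: x\ge0,\ Mx+q\ge0\}$; $\mathcal{G}_f=\{x\in\mathbb{R}^n:\nabla f_r(x)=0\}$. A P-matrix is a square matrix all of whose principal minors are positive. *)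

theory Defs
  imports "HOL-Analysis.Analysis"
begin

definition pos_part :: "real^'n \<Rightarrow> real^'n" where
  "pos_part x = (\<chi> i. max (x $ i) 0)"

definition neg_part :: "real^'n \<Rightarrow> real^'n" where
  "neg_part x = (\<chi> i. min (x $ i) 0)"

definition f_r :: "real^'n^'n \<Rightarrow> real^'n \<Rightarrow> real \<Rightarrow> real^'n \<Rightarrow> real" where
  "f_r M q r x = (1 / r) *
     ((\<Sum>i\<in>UNIV. (pos_part x $ i) powr r * (pos_part (M *v x + q) $ i) powr r)
      + (\<Sum>i\<in>UNIV. \<bar>neg_part x $ i\<bar> powr r)
      + (\<Sum>i\<in>UNIV. \<bar>neg_part (M *v x + q) $ i\<bar> powr r))"

definition lcp_sol :: "real^'n^'n \<Rightarrow> real^'n \<Rightarrow> (real^'n) set" where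
  "lcp_sol M q = {x. (\<forall>i. 0 \<le> x $ i) \<and> (\<forall>i. 0 \<le> (M *v x + q) $ i) \<and> x \<bullet> (M *v x + q) = 0}"

definition lcp_fea :: "real^'n^'n \<Rightarrow> real^'n \<Rightarrow> (real^'n) set" where
  "lcp_fea M q = {x. (\<forall>i. 0 \<le> x $ i) \<and> (\<forall>i. 0 \<le> (M *v x + q) $ i)}"

definition stat_set :: "real^'n^'n \<Rightarrow> real^'n \<Rightarrow> real \<Rightarrow> (real^'n) set" where
  "stat_set M q r = {x. (f_r M q r has_derivative (\<lambda>h. 0)) (at x)}"

definition psd_matrix :: "real^'n^'n \<Rightarrow> bool" where
  "psd_matrix M \<longleftrightarrow> (\<forall>x. 0 \<le> x \<bullet> (M *v x))"

text \<open>Principal minor indexed by S, via the Leibniz formula (as det is defined in the library).\<close>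
definition principal_minor :: "real^'n^'n \<Rightarrow> 'n set \<Rightarrow> real" where
  "principal_minor M S = (\<Sum>p | p permutes S. of_int (sign p) * (\<Prod>i\<in>S. M $ i $ p i))"

definition P_matrix :: "real^'n^'n \<Rightarrow> bool" where
  "P_matrix M \<longleftrightarrow> (\<forall>S. S \<noteq> {} \<longrightarrow> 0 < principal_minor M S)"

end

theory Submission
  imports Defs
begin

definition phi :: "real \<Rightarrow> real \<Rightarrow> real" where
  "phi r t = max t 0 powr r"

definition dphi :: "real \<Rightarrow> real \<Rightarrow> real" where
  "dphi r t = r * max t 0 powr (r - 1)"

lemma phi_nonneg: "0 \<le> phi r t" by (simp add: phi_def)

lemma phi_pos_iff: "0 < phi r t \<longleftrightarrow> 0 < t"
  by (auto simp: phi_def max_def)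

lemma dphi_nonneg: "r > 1 \<Longrightarrow> 0 \<le> dphi r t" by (simp add: dphi_def)

lemma dphi_pos_iff: "r > 1 \<Longrightarrow> 0 < dphi r t \<longleftrightarrow> 0 < t"
  by (auto simp: dphi_def max_def)

lemma phi_ge: assumes "r \<ge> 1" shows "t - 1 \<le> phi r t"
proof (cases "t \<ge> 1")
  case True
  have "t = t powr 1" using True by simp
  also have "\<dots> \<le> t powr r" using True assms by (intro powr_mono) auto
  finally show ?thesis using True by (simp add: phi_def max_def)
next
  case False
  then show ?thesis using phi_nonneg[of r t] by linarith
qed

lemma phi_deriv:
  assumes r: "r > 1"
  shows "(phi r has_real_derivative dphi r t) (at t)"
proof (cases "t > 0")
  case True
  have "((\<lambda>z. z powr r) has_real_derivative dphi r t) (at t)"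
    using has_real_derivative_powr[OF True, of r] True by (simp add: dphi_def max_def)
  then show ?thesis
    by (rule has_field_derivative_transform_within_open[where S="{0<..}"])
      (use True in \<open>auto simp: phi_def\<close>)
next
  case False
  show ?thesis
  proof (cases "t < 0")
    case True
    have "((\<lambda>z. 0::real) has_real_derivative 0) (at t)" by simp
    then have "(phi r has_real_derivative 0) (at t)"
      apply (rule has_field_derivative_transform_within_open[where S="{..<0}"])
      using True by (auto simp: phi_def)
    then show ?thesis using True by (simp add: dphi_def)
  next
    case False2: False
    with False have t0: "t = 0" by simp
    have "((\<lambda>y. (phi r y - phi r 0) / (y - 0)) \<longlongrightarrow> 0) (at 0)"
    proof (rule Lim_null_comparison)
      show "\<forall>\<^sub>F y in at 0. norm ((phi r y - phi r 0) / (y - 0)) \<le> \<bar>y\<bar> powr (r - 1)"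
      proof (intro always_eventually allI)
        fix y :: real
        show "norm ((phi r y - phi r 0) / (y - 0)) \<le> \<bar>y\<bar> powr (r - 1)"
        proof (cases "y > 0")
          case True
          have "y powr r / y = y powr (r - 1)"
            using True by (simp add: powr_diff)
          then show ?thesis using True by (simp add: phi_def)
        next
          case False
          then show ?thesis by (simp add: phi_def max_def)
        qed
      qed
      have "((\<lambda>y. \<bar>y\<bar> powr (r - 1)) \<longlongrightarrow> \<bar>0\<bar> powr (r - 1)) (at (0::real))"
        using r by (intro tendsto_powr' tendsto_intros) auto
      then show "((\<lambda>y. \<bar>y\<bar> powr (r - 1)) \<longlongrightarrow> 0) (at (0::real))" by simp
    qed
    then have "(phi r has_real_derivative 0) (at 0)"
      by (simp add: has_field_derivative_iff)
    then show ?thesis using t0 r by (simp add: dphi_def)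
  qed
qed

lemma phi_comp:
  assumes r: "r > 1" and g: "(g has_derivative g') (at x)"
  shows "((\<lambda>x. phi r (g x)) has_derivative (\<lambda>h. dphi r (g x) * g' h)) (at x)"
  using has_derivative_compose[OF g has_field_derivative_imp_has_derivative[OF phi_deriv[OF r]]] .

lemma nth_deriv: "((\<lambda>x::real^'n. x $ i) has_derivative (\<lambda>h. h $ i)) (at x)"
  by (rule bounded_linear_imp_has_derivative[OF bounded_linear_vec_nth])

lemma nnth_deriv: "((\<lambda>x::real^'n. - (x $ i)) has_derivative (\<lambda>h. - (h $ i))) (at x)"
  by (intro has_derivative_minus nth_deriv)

lemma ynth_deriv: "((\<lambda>x::real^'n. (M *v x + q) $ i) has_derivative (\<lambda>h. (M *v h) $ i)) (at x)"
proof -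
  have bl: "bounded_linear (\<lambda>h::real^'n. (M *v h) $ i)"
    by (rule bounded_linear_compose[OF bounded_linear_vec_nth matrix_vector_mul_bounded_linear])
  have "((\<lambda>x::real^'n. (M *v x) $ i + q $ i) has_derivative (\<lambda>h. (M *v h) $ i)) (at x)"
    by (rule has_derivative_add_const[OF bounded_linear_imp_has_derivative[OF bl]])
  then show ?thesis by simp
qed

lemma nynth_deriv: "((\<lambda>x::real^'n. - ((M *v x + q) $ i)) has_derivative (\<lambda>h. - ((M *v h) $ i))) (at x)"
  by (intro has_derivative_minus ynth_deriv)

lemma f_r_alt:
  "f_r M q r = (\<lambda>x. (1 / r) *
     ((\<Sum>i\<in>UNIV. phi r (x $ i) * phi r ((M *v x + q) $ i))
      + (\<Sum>i\<in>UNIV. phi r (- (x $ i)))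
      + (\<Sum>i\<in>UNIV. phi r (- ((M *v x + q) $ i)))))"
proof -
  have a: "\<bar>min t 0\<bar> = max (- t) 0" for t :: real by (auto simp: min_def max_def)
  show ?thesis
    by (rule ext) (simp add: f_r_def phi_def pos_part_def neg_part_def a)
qed

definition Acoef :: "real^'n^'n \<Rightarrow> real^'n \<Rightarrow> real \<Rightarrow> real^'n \<Rightarrow> 'n \<Rightarrow> real" where
  "Acoef M q r x i = (1 / r) * (dphi r (x $ i) * phi r ((M *v x + q) $ i) - dphi r (- (x $ i)))"

definition Bcoef :: "real^'n^'n \<Rightarrow> real^'n \<Rightarrow> real \<Rightarrow> real^'n \<Rightarrow> 'n \<Rightarrow> real" where
  "Bcoef M q r x i = (1 / r) * (phi r (x $ i) * dphi r ((M *v x + q) $ i) - dphi r (- ((M *v x + q) $ i)))"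

definition Dfr :: "real^'n^'n \<Rightarrow> real^'n \<Rightarrow> real \<Rightarrow> real^'n \<Rightarrow> real^'n \<Rightarrow> real" where
  "Dfr M q r x h = (\<Sum>i\<in>UNIV. Acoef M q r x i * h $ i + Bcoef M q r x i * (M *v h) $ i)"

lemma f_r_deriv:
  assumes r: "r > 1"
  shows "(f_r M q r has_derivative Dfr M q r x) (at x)"
proof -
  note d1 = phi_comp[OF r nth_deriv] and d2 = phi_comp[OF r ynth_deriv]
   and d3 = phi_comp[OF r nnth_deriv] and d4 = phi_comp[OF r nynth_deriv]
  have "((\<lambda>x. (1 / r) *
     ((\<Sum>i\<in>UNIV. phi r (x $ i) * phi r ((M *v x + q) $ i))
      + (\<Sum>i\<in>UNIV. phi r (- (x $ i)))
      + (\<Sum>i\<in>UNIV. phi r (- ((M *v x + q) $ i))))) has_derivative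
      (\<lambda>h. (1 / r) *
     ((\<Sum>i\<in>UNIV. phi r (x $ i) * (dphi r ((M *v x + q) $ i) * (M *v h) $ i)
          + dphi r (x $ i) * h $ i * phi r ((M *v x + q) $ i))
      + (\<Sum>i\<in>UNIV. dphi r (- (x $ i)) * (- (h $ i)))
      + (\<Sum>i\<in>UNIV. dphi r (- ((M *v x + q) $ i)) * (- ((M *v h) $ i)))))) (at x)"
    by (intro has_derivative_mult_right has_derivative_add has_derivative_sum
          has_derivative_mult d1 d2 d3 d4)
  then show ?thesis
    unfolding f_r_alt
  proof (rule has_derivative_eq_rhs)
    show "(\<lambda>h. (1 / r) *
     ((\<Sum>i\<in>UNIV. phi r (x $ i) * (dphi r ((M *v x + q) $ i) * (M *v h) $ i)
          + dphi r (x $ i) * h $ i * phi r ((M *v x + q) $ i))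
      + (\<Sum>i\<in>UNIV. dphi r (- (x $ i)) * (- (h $ i)))
      + (\<Sum>i\<in>UNIV. dphi r (- ((M *v x + q) $ i)) * (- ((M *v h) $ i))))) = Dfr M q r x"
      by (rule ext) (simp add: Dfr_def Acoef_def Bcoef_def sum_distrib_left
          sum.distrib[symmetric] algebra_simps sum_negf)
  qed
qed

lemma phi_zero: "u \<le> 0 \<Longrightarrow> phi r u = 0" by (simp add: phi_def max_def)
lemma dphi_zero: "u \<le> 0 \<Longrightarrow> dphi r u = 0" by (simp add: dphi_def max_def)
lemma phi_pos: "u > 0 \<Longrightarrow> phi r u > 0" by (simp add: phi_pos_iff)
lemma dphi_pos: "r > 1 \<Longrightarrow> u > 0 \<Longrightarrow> dphi r u > 0" by (simp add: dphi_pos_iff)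

lemma scalar_AB:
  fixes s t r :: real
  assumes r: "r > 1"
  defines "a \<equiv> (1 / r) * (dphi r s * phi r t - dphi r (- s))"
    and "b \<equiv> (1 / r) * (phi r s * dphi r t - dphi r (- t))"
  shows "0 \<le> a * b"
    and "a * b = 0 \<longleftrightarrow> \<not> (s > 0 \<and> t > 0) \<and> \<not> (s < 0 \<and> t < 0)"
    and "a * b = 0 \<Longrightarrow> a = - (1 / r) * dphi r (- s) \<and> b = - (1 / r) * dphi r (- t)"
    and "a = 0 \<and> b = 0 \<longleftrightarrow> s \<ge> 0 \<and> t \<ge> 0 \<and> s * t = 0"
proof -
  have rp: "1 / r > 0" using r by simp
  consider "s > 0" "t > 0" | "s > 0" "t \<le> 0" | "s \<le> 0" "t > 0" | "s \<le> 0" "t \<le> 0" by linarith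
  note cs = this
  have A: "0 \<le> a * b \<and> (a * b = 0 \<longleftrightarrow> \<not> (s > 0 \<and> t > 0) \<and> \<not> (s < 0 \<and> t < 0))
     \<and> (a * b = 0 \<longrightarrow> a = - (1 / r) * dphi r (- s) \<and> b = - (1 / r) * dphi r (- t))
     \<and> (a = 0 \<and> b = 0 \<longleftrightarrow> s \<ge> 0 \<and> t \<ge> 0 \<and> s * t = 0)"
  proof (cases rule: cs)
    case 1
    have "a > 0" unfolding a_def using 1 r
      by (simp add: dphi_zero phi_pos dphi_pos)
    moreover have "b > 0" unfolding b_def using 1 r
      by (simp add: dphi_zero phi_pos dphi_pos)
    ultimately show ?thesis using 1 by auto
  next
    case 2
    have a0: "a = 0" unfolding a_def using 2 by (simp add: dphi_zero phi_zero)
    have b: "b = - (1 / r) * dphi r (- t)" unfolding b_def using 2 by (simp add: dphi_zero)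
    have bz: "b = 0 \<longleftrightarrow> t = 0"
      using b r dphi_pos[OF r, of "-t"] 2 by (cases "t < 0") (auto simp: dphi_zero)
    have "dphi r (- s) = 0" using 2 by (simp add: dphi_zero)
    then show ?thesis using 2 a0 b bz by auto
  next
    case 3
    have b0: "b = 0" unfolding b_def using 3 by (simp add: dphi_zero phi_zero)
    have a: "a = - (1 / r) * dphi r (- s)" unfolding a_def using 3 by (simp add: phi_zero dphi_zero)
    have az: "a = 0 \<longleftrightarrow> s = 0"
      using a r dphi_pos[OF r, of "-s"] 3 by (cases "s < 0") (auto simp: dphi_zero)
    have "dphi r (- t) = 0" using 3 by (simp add: dphi_zero)
    then show ?thesis using 3 b0 a az by auto
  next
    case 4
    have a: "a = - (1 / r) * dphi r (- s)" unfolding a_def using 4 by (simp add: phi_zero dphi_zero)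
    have b: "b = - (1 / r) * dphi r (- t)" unfolding b_def using 4 by (simp add: phi_zero dphi_zero)
    have az: "a = 0 \<longleftrightarrow> s = 0" and an: "a \<le> 0"
      using a r dphi_pos[OF r, of "-s"] dphi_nonneg[OF r, of "-s"] 4 by (cases "s < 0"; auto simp: dphi_zero)+
    have bz: "b = 0 \<longleftrightarrow> t = 0" and bn: "b \<le> 0"
      using b r dphi_pos[OF r, of "-t"] dphi_nonneg[OF r, of "-t"] 4 by (cases "t < 0"; auto simp: dphi_zero)+
    have "0 \<le> a * b" using an bn by (simp add: mult_nonpos_nonpos)
    moreover have "a * b = 0 \<longleftrightarrow> s = 0 \<or> t = 0" using az bz by auto
    ultimately show ?thesis using 4 a b az bz by auto
  qed
  then show "0 \<le> a * b"
    and "a * b = 0 \<longleftrightarrow> \<not> (s > 0 \<and> t > 0) \<and> \<not> (s < 0 \<and> t < 0)"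
    and "a * b = 0 \<Longrightarrow> a = - (1 / r) * dphi r (- s) \<and> b = - (1 / r) * dphi r (- t)"
    and "a = 0 \<and> b = 0 \<longleftrightarrow> s \<ge> 0 \<and> t \<ge> 0 \<and> s * t = 0"
    by blast+
qed

lemma sol_char:
  "x \<in> lcp_sol M q \<longleftrightarrow> (\<forall>i. 0 \<le> x $ i \<and> 0 \<le> (M *v x + q) $ i \<and> x $ i * (M *v x + q) $ i = 0)"
proof -
  have "(\<forall>i. 0 \<le> x $ i) \<and> (\<forall>i. 0 \<le> (M *v x + q) $ i) \<Longrightarrow>
     x \<bullet> (M *v x + q) = 0 \<longleftrightarrow> (\<forall>i. x $ i * (M *v x + q) $ i = 0)"
    unfolding inner_vec_def by (subst sum_nonneg_eq_0_iff) auto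
  then show ?thesis unfolding lcp_sol_def by auto
qed

lemma sol_iff_AB:
  assumes r: "r > 1"
  shows "x \<in> lcp_sol M q \<longleftrightarrow> (\<forall>i. Acoef M q r x i = 0 \<and> Bcoef M q r x i = 0)"
  unfolding sol_char Acoef_def Bcoef_def using scalar_AB(4)[OF r] by blast

lemma sol_imp_stat:
  assumes r: "r > 1" and x: "x \<in> lcp_sol M q"
  shows "x \<in> stat_set M q r"
proof -
  have "Dfr M q r x = (\<lambda>h. 0)"
    using x unfolding sol_iff_AB[OF r] by (auto simp: Dfr_def)
  then show ?thesis using f_r_deriv[OF r, of M q x] by (simp add: stat_set_def)
qed

lemma stat_imp_D0:
  assumes r: "r > 1" and x: "x \<in> stat_set M q r"
  shows "\<And>h. Dfr M q r x h = 0"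
proof -
  have "Dfr M q r x = (\<lambda>h. 0)"
    using has_derivative_unique[OF f_r_deriv[OF r] x[unfolded stat_set_def, simplified]] .
  then show "\<And>h. Dfr M q r x h = 0" by simp
qed

lemma scalar_neg_term:
  fixes s w r :: real
  assumes r: "r > 1" and w: "0 \<le> w"
  shows "0 \<le> (- (1 / r) * dphi r (- s)) * (s - w)"
    and "(- (1 / r) * dphi r (- s)) * (s - w) = 0 \<Longrightarrow> 0 \<le> s"
proof -
  have "0 \<le> (- (1 / r) * dphi r (- s)) * (s - w) \<and>
        ((- (1 / r) * dphi r (- s)) * (s - w) = 0 \<longrightarrow> 0 \<le> s)"
  proof (cases "s < 0")
    case True
    have "dphi r (- s) > 0" using dphi_pos[OF r, of "-s"] True by simp
    then have "- (1 / r) * dphi r (- s) < 0" using r by (simp add: field_simps)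
    moreover have "s - w < 0" using True w by simp
    ultimately have "0 < (- (1 / r) * dphi r (- s)) * (s - w)" by (rule mult_neg_neg)
    then show ?thesis by (intro conjI impI; linarith)
  next
    case False
    then show ?thesis by (simp add: dphi_zero)
  qed
  then show "0 \<le> (- (1 / r) * dphi r (- s)) * (s - w)"
    and "(- (1 / r) * dphi r (- s)) * (s - w) = 0 \<Longrightarrow> 0 \<le> s" by blast+
qed

lemma D0_B:
  assumes r: "r > 1" and x: "x \<in> stat_set M q r"
  shows "(\<Sum>i\<in>UNIV. Acoef M q r x i * Bcoef M q r x i)
       + (\<chi> i. Bcoef M q r x i) \<bullet> (M *v (\<chi> i. Bcoef M q r x i)) = 0"
  using stat_imp_D0[OF r x, of "\<chi> i. Bcoef M q r x i"]
  by (simp add: Dfr_def inner_vec_def sum.distrib)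

lemma psd_stat_imp_sol:
  assumes r: "r > 1" and psd: "psd_matrix M" and u: "u \<in> lcp_fea M q"
    and x: "x \<in> stat_set M q r"
  shows "x \<in> lcp_sol M q"
proof -
  define A where "A i = Acoef M q r x i" for i
  define B where "B i = Bcoef M q r x i" for i
  define y where "y = M *v x + q"
  define v where "v = M *v u + q"
  have ABnn: "\<And>i. 0 \<le> A i * B i"
    unfolding A_def B_def Acoef_def Bcoef_def by (rule scalar_AB(1)[OF r])
  have "0 \<le> (\<chi> i. B i) \<bullet> (M *v (\<chi> i. B i))" using psd by (simp add: psd_matrix_def)
  then have "(\<Sum>i\<in>UNIV. A i * B i) \<le> 0" using D0_B[OF r x] unfolding A_def B_def by linarith
  then have "(\<Sum>i\<in>UNIV. A i * B i) = 0" using ABnn by (meson order_antisym sum_nonneg)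
  then have AB0: "\<And>i. A i * B i = 0" using ABnn by (simp add: sum_nonneg_eq_0_iff)
  have Ae: "A i = - (1 / r) * dphi r (- (x $ i))" and Be: "B i = - (1 / r) * dphi r (- (y $ i))" for i
    using scalar_AB(3)[OF r, of "x $ i" "y $ i"] AB0[of i] unfolding A_def B_def Acoef_def Bcoef_def y_def
    by auto
  have u0: "\<And>i. 0 \<le> u $ i" and v0: "\<And>i. 0 \<le> v $ i" using u by (auto simp: lcp_fea_def v_def)
  have Mxu: "M *v (x - u) = y - v" by (simp add: y_def v_def matrix_vector_mult_diff_distrib)
  have "Dfr M q r x (x - u) = 0" by (rule stat_imp_D0[OF r x])
  then have S0: "(\<Sum>i\<in>UNIV. A i * (x $ i - u $ i) + B i * (y $ i - v $ i)) = 0"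
    unfolding Dfr_def A_def[symmetric] B_def[symmetric] Mxu by simp
  have t1: "0 \<le> A i * (x $ i - u $ i)" and t2: "0 \<le> B i * (y $ i - v $ i)" for i
    unfolding Ae Be using scalar_neg_term(1)[OF r u0] scalar_neg_term(1)[OF r v0] by auto
  have "\<forall>i\<in>UNIV. A i * (x $ i - u $ i) + B i * (y $ i - v $ i) = 0"
    using S0 t1 t2 by (subst (asm) sum_nonneg_eq_0_iff) (auto intro: add_nonneg_nonneg)
  then have "A i * (x $ i - u $ i) = 0 \<and> B i * (y $ i - v $ i) = 0" for i
    using t1[of i] t2[of i] add_nonneg_eq_0_iff by blast
  then have xn: "0 \<le> x $ i" and yn: "0 \<le> y $ i" for i
    unfolding Ae Be using scalar_neg_term(2)[OF r u0] scalar_neg_term(2)[OF r v0] by blast+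
  have "\<not> (x $ i > 0 \<and> y $ i > 0)" for i
    using scalar_AB(2)[OF r, of "x $ i" "y $ i"] AB0[of i] unfolding A_def B_def Acoef_def Bcoef_def y_def
    by auto
  then have "x $ i * y $ i = 0" for i using xn[of i] yn[of i] by (auto simp: less_le)
  then show ?thesis unfolding sol_char y_def[symmetric] using xn yn by auto
qed

definition snr :: "real^'n^'n \<Rightarrow> bool" where
  "snr M \<longleftrightarrow> (\<forall>z. z \<noteq> 0 \<longrightarrow> (\<exists>i. 0 < z $ i * (M *v z) $ i))"

lemma mv_axis: "(M *v axis j 1) $ i = M $ i $ j"
  by (simp add: matrix_vector_mult_def axis_def if_distrib cong: if_cong)

lemma mtv_nth: fixes M :: "real^'n^'n" shows "(transpose M *v z) $ j = (\<Sum>i\<in>UNIV. z $ i * M $ i $ j)"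
  by (auto simp: matrix_vector_mult_def transpose_def mult.commute intro!: sum.cong simp del: transpose_matrix_vector)

lemma snrT_stat_imp_sol:
  assumes r: "r > 1" and snr: "snr (transpose M)" and x: "x \<in> stat_set M q r"
  shows "x \<in> lcp_sol M q"
proof -
  define A where "A i = Acoef M q r x i" for i
  define B where "B = (\<chi> i. Bcoef M q r x i)"
  have eqj: "A j + (transpose M *v B) $ j = 0" for j
  proof -
    have "Dfr M q r x (axis j 1) = 0" by (rule stat_imp_D0[OF r x])
    then have "(\<Sum>i\<in>UNIV. A i * axis j 1 $ i) + (\<Sum>i\<in>UNIV. B $ i * M $ i $ j) = 0"
      unfolding Dfr_def mv_axis A_def B_def by (simp add: sum.distrib)
    moreover have "(\<Sum>i\<in>UNIV. A i * axis j 1 $ i) = A j"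
      by (simp add: axis_def if_distrib cong: if_cong)
    ultimately show ?thesis by (simp add: mtv_nth del: transpose_matrix_vector)
  qed
  have ABnn: "0 \<le> A i * B $ i" for i
  proof -
    have "0 \<le> A i * Bcoef M q r x i"
      unfolding A_def Acoef_def Bcoef_def by (rule scalar_AB(1)[OF r])
    then show ?thesis by (simp add: B_def)
  qed
  have "B = 0"
  proof (rule ccontr)
    assume "B \<noteq> 0"
    then obtain j where "0 < B $ j * (transpose M *v B) $ j" using snr unfolding snr_def by blast
    moreover have "(transpose M *v B) $ j = - A j" using eqj[of j] by linarith
    ultimately show False using ABnn[of j] by (simp add: mult.commute)
  qed
  then have "A j = 0" for j using eqj[of j] by simp
  moreover have "Bcoef M q r x j = 0" for j using \<open>B = 0\<close> unfolding B_def
    by (metis vec_lambda_beta zero_index)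
  ultimately show ?thesis unfolding sol_iff_AB[OF r] A_def by simp
qed

lemma snr_unique:
  assumes snr: "snr M" and x: "x \<in> lcp_sol M q" and x': "x' \<in> lcp_sol M q"
  shows "x = x'"
proof (rule ccontr)
  assume "x \<noteq> x'"
  then have "x - x' \<noteq> 0" by simp
  then obtain i where i: "0 < (x - x') $ i * (M *v (x - x')) $ i" using snr unfolding snr_def by blast
  have "M *v (x - x') = (M *v x + q) - (M *v x' + q)" by (simp add: matrix_vector_mult_diff_distrib)
  then have e: "(x - x') $ i * (M *v (x - x')) $ i
     = x $ i * (M *v x + q) $ i + x' $ i * (M *v x' + q) $ i
       - x $ i * (M *v x' + q) $ i - x' $ i * (M *v x + q) $ i"
    by (simp add: algebra_simps)
  have "0 \<le> x $ i * (M *v x' + q) $ i" "0 \<le> x' $ i * (M *v x + q) $ i"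
    using x x' unfolding sol_char by auto
  moreover have "x $ i * (M *v x + q) $ i = 0" "x' $ i * (M *v x' + q) $ i = 0"
    using x x' unfolding sol_char by auto
  ultimately show False using i e by linarith
qed

lemma snr_uniform:
  fixes M :: "real^'n^'n"
  assumes snr: "snr M"
  shows "\<exists>\<mu>>0. \<forall>x. \<exists>i. \<mu> * (norm x)\<^sup>2 \<le> x $ i * (M *v x) $ i"
proof -
  define h where "h z = (\<Sum>i\<in>UNIV. max (z $ i * (M *v z) $ i) 0)" for z :: "real^'n"
  have cont: "continuous_on (sphere 0 1) h"
    unfolding h_def
    by (intro continuous_intros continuous_on_component
        matrix_vector_mult_linear_continuous_on continuous_on_id)
  obtain i0 :: 'n where True by blast
  have "(axis i0 1 :: real^'n) \<in> sphere 0 1" by (simp add: norm_axis_1)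
  then have ne: "sphere (0::real^'n) 1 \<noteq> {}" by blast
  obtain z where z: "z \<in> sphere 0 1" and zmin: "\<And>w. w \<in> sphere 0 1 \<Longrightarrow> h z \<le> h w"
    using continuous_attains_inf[OF compact_sphere ne cont] by blast
  have "z \<noteq> 0" using z by auto
  then obtain k where k: "0 < z $ k * (M *v z) $ k" using snr unfolding snr_def by blast
  have "0 < max (z $ k * (M *v z) $ k) 0" using k by simp
  also have "\<dots> \<le> h z" unfolding h_def by (rule member_le_sum) auto
  finally have hz: "0 < h z" .
  define c where "c = h z / real CARD('n)"
  have c: "0 < c" using hz by (simp add: c_def)
  show ?thesis
  proof (intro exI[of _ c] conjI allI c)
    fix x :: "real^'n"
    show "\<exists>i. c * (norm x)\<^sup>2 \<le> x $ i * (M *v x) $ i"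
    proof (cases "x = 0")
      case True then show ?thesis by simp
    next
      case False
      define w where "w = (1 / norm x) *\<^sub>R x"
      have w: "w \<in> sphere 0 1" using False by (simp add: w_def)
      have xw: "x = norm x *\<^sub>R w" using False by (simp add: w_def)
      have "\<exists>i. c \<le> max (w $ i * (M *v w) $ i) 0"
      proof (rule ccontr)
        assume "\<not> ?thesis"
        then have "\<And>i. max (w $ i * (M *v w) $ i) 0 < c" by (simp add: not_le)
        then have "h w < (\<Sum>i\<in>(UNIV::'n set). c)" unfolding h_def
          by (intro sum_strict_mono) auto
        also have "\<dots> = h z" by (simp add: c_def)
        finally show False using zmin[OF w] by simp
      qed
      then obtain i where "c \<le> max (w $ i * (M *v w) $ i) 0" by blast
      then have wi: "c \<le> w $ i * (M *v w) $ i" using c by (simp add: le_max_iff_disj)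
      have "x $ i * (M *v x) $ i = (norm x)\<^sup>2 * (w $ i * (M *v w) $ i)"
        by (subst (1 2) xw) (simp add: matrix_vector_mult_scaleR power2_eq_square)
      then have "c * (norm x)\<^sup>2 \<le> x $ i * (M *v x) $ i"
        using mult_right_mono[OF wi, of "(norm x)\<^sup>2"] by (simp add: mult.commute)
      then show ?thesis by blast
    qed
  qed
qed

lemma f_r_parts:
  assumes r: "r > 0" and C: "f_r M q r x \<le> C"
  shows "0 \<le> f_r M q r x"
    and "phi r (x $ i) * phi r ((M *v x + q) $ i) \<le> r * C"
    and "phi r (- (x $ i)) \<le> r * C"
proof -
  define S1 where "S1 = (\<Sum>i\<in>UNIV. phi r (x $ i) * phi r ((M *v x + q) $ i))"
  define S2 where "S2 = (\<Sum>i\<in>UNIV. phi r (- (x $ i)))"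
  define S3 where "S3 = (\<Sum>i\<in>UNIV. phi r (- ((M *v x + q) $ i)))"
  have f: "f_r M q r x = (1 / r) * (S1 + S2 + S3)" by (simp add: f_r_alt S1_def S2_def S3_def)
  have n1: "0 \<le> S1" unfolding S1_def by (intro sum_nonneg mult_nonneg_nonneg phi_nonneg)
  have n2: "0 \<le> S2" unfolding S2_def by (intro sum_nonneg phi_nonneg)
  have n3: "0 \<le> S3" unfolding S3_def by (intro sum_nonneg phi_nonneg)
  show "0 \<le> f_r M q r x" unfolding f using r n1 n2 n3 by simp
  have "S1 + S2 + S3 \<le> r * C" using C r unfolding f by (simp add: field_simps)
  moreover have "phi r (x $ i) * phi r ((M *v x + q) $ i) \<le> S1" unfolding S1_def
    by (rule member_le_sum) (auto intro: mult_nonneg_nonneg phi_nonneg)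
  moreover have "phi r (- (x $ i)) \<le> S2" unfolding S2_def
    by (rule member_le_sum) (auto intro: phi_nonneg)
  ultimately show "phi r (x $ i) * phi r ((M *v x + q) $ i) \<le> r * C"
    and "phi r (- (x $ i)) \<le> r * C" using n1 n2 n3 by linarith+
qed

lemma coercive:
  fixes M :: "real^'n^'n"
  assumes r: "r > 1" and snr: "snr M" and C: "0 \<le> C"
  shows "\<exists>R. \<forall>x. f_r M q r x \<le> C \<longrightarrow> norm x \<le> R"
proof -
  obtain \<mu> where mu: "\<mu> > 0" and muP: "\<And>x. \<exists>i. \<mu> * (norm x)\<^sup>2 \<le> x $ i * (M *v x) $ i"
    using snr_uniform[OF snr] by blast
  obtain K where K: "K > 0" and KP: "\<And>x. norm (M *v x) \<le> norm x * K"
    using bounded_linear.pos_bounded[OF matrix_vector_mul_bounded_linear[of M]] by blast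
  define Bd where "Bd = r * C + 1"
  define Q where "Q = norm q"
  define R where "R = max (Bd * K / \<mu>) ((Q + 2) / \<mu>)"
  have Bd: "Bd > 0" using r C by (simp add: Bd_def add_nonneg_pos)
  have R0: "0 \<le> R" using Bd K mu by (simp add: R_def le_max_iff_disj)
  show ?thesis
  proof (intro exI[of _ R] allI impI)
    fix x :: "real^'n"
    assume fx: "f_r M q r x \<le> C"
    define N where "N = norm x"
    show "norm x \<le> R"
    proof (cases "N = 0")
      case True then show ?thesis using R0 by (simp add: N_def)
    next
      case False
      then have N: "N > 0" by (simp add: N_def)
      obtain i where i: "\<mu> * N\<^sup>2 \<le> x $ i * (M *v x) $ i" using muP[of x] N_def by blast
      define t where "t = x $ i"
      define s where "s = (M *v x) $ i"
      have tN: "\<bar>t\<bar> \<le> N" unfolding t_def N_def by (rule component_le_norm_cart)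
      have sN: "\<bar>s\<bar> \<le> N * K"
        using component_le_norm_cart[of "M *v x" i] KP[of x] unfolding s_def N_def by linarith
      have qQ: "\<bar>q $ i\<bar> \<le> Q" unfolding Q_def by (rule component_le_norm_cart)
      have "phi r (- t) \<le> r * C" unfolding t_def by (rule f_r_parts(3)) (use r fx in auto)
      then have tB: "- t \<le> Bd" using phi_ge[of r "-t"] r unfolding Bd_def by linarith
      have P: "phi r t * phi r (s + q $ i) \<le> r * C"
        using f_r_parts(2)[of r M q x C i] r fx unfolding t_def s_def by simp
      have pos: "0 < \<mu> * N\<^sup>2" using mu N by simp
      then have "0 < t * s" using i unfolding t_def s_def by linarith
      then consider "t > 0" "s > 0" | "t < 0" "s < 0" by (auto simp: zero_less_mult_iff)
      then have "N \<le> R"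
      proof cases
        case 1
        have "t * s \<le> t * (N * K)" using sN 1 by (intro mult_left_mono) auto
        then have "\<mu> * N * N \<le> (t * K) * N" using i unfolding t_def s_def
          by (simp add: power2_eq_square algebra_simps)
        then have tK: "\<mu> * N \<le> t * K" using N by (simp add: mult_le_cancel_right)
        have "t * s \<le> N * s" using tN 1 by (intro mult_right_mono) auto
        then have "\<mu> * N * N \<le> s * N" using i unfolding t_def s_def
          by (simp add: power2_eq_square algebra_simps)
        then have sm: "\<mu> * N \<le> s" using N by (simp add: mult_le_cancel_right)
        show ?thesis
        proof (cases "N \<le> (Q + 2) / \<mu>")
          case True then show ?thesis by (simp add: R_def)
        next
          case False
          then have "\<mu> * N > Q + 2" using mu by (simp add: field_simps)
          then have y2: "s + q $ i > 2" using sm qQ by linarith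
          then have py: "phi r (s + q $ i) \<ge> 1" using phi_ge[of r "s + q $ i"] r by linarith
          have "phi r t * 1 \<le> phi r t * phi r (s + q $ i)"
            by (rule mult_left_mono[OF py phi_nonneg])
          then have "t - 1 \<le> r * C" using P phi_ge[of r t] r by linarith
          then have "t \<le> Bd" by (simp add: Bd_def)
          then have "\<mu> * N \<le> Bd * K" using tK K by (smt (verit) mult_right_mono)
          then have "N \<le> Bd * K / \<mu>" using mu by (simp add: field_simps)
          then show ?thesis by (simp add: R_def)
        qed
      next
        case 2
        have "t * s = \<bar>t\<bar> * \<bar>s\<bar>" using 2 by (simp add: abs_mult[symmetric] zero_less_mult_iff less_imp_le)
        also have "\<dots> \<le> Bd * (N * K)"
          using tB sN 2 Bd by (intro mult_mono) auto
        finally have "\<mu> * N * N \<le> (Bd * K) * N" using i unfolding t_def s_def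
          by (simp add: power2_eq_square algebra_simps)
        then have "\<mu> * N \<le> Bd * K" using N by (simp add: mult_le_cancel_right)
        then have "N \<le> Bd * K / \<mu>" using mu by (simp add: field_simps)
        then show ?thesis by (simp add: R_def)
      qed
      then show ?thesis by (simp add: N_def)
    qed
  qed
qed

lemma snr_exists:
  fixes M :: "real^'n^'n" and r :: real
  assumes r: "r > 1" and snr: "snr M" and snrT: "snr (transpose M)"
  shows "\<exists>x. x \<in> lcp_sol M q"
proof -
  let ?f = "f_r M q r"
  have C0: "0 \<le> ?f 0" using f_r_parts(1)[of r M q 0 "?f 0"] r by simp
  obtain R where R: "\<And>x. ?f x \<le> ?f 0 \<Longrightarrow> norm x \<le> R"
    using coercive[OF r snr C0] by blast
  have R0: "0 \<le> R" using R[of 0] by simp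
  have cont: "continuous_on (cball 0 R) ?f"
    by (intro continuous_at_imp_continuous_on ballI has_derivative_continuous[OF f_r_deriv[OF r]])
  obtain z where z: "z \<in> cball 0 R" and zmin: "\<And>w. w \<in> cball 0 R \<Longrightarrow> ?f z \<le> ?f w"
    using continuous_attains_inf[OF compact_cball _ cont] R0 by fastforce
  have glob: "\<forall>w\<in>UNIV. ?f z \<le> ?f w"
  proof
    fix w :: "real^'n"
    show "?f z \<le> ?f w"
    proof (cases "norm w \<le> R")
      case True then show ?thesis using zmin by simp
    next
      case False
      then have "?f 0 < ?f w" using R[of w] by fastforce
      moreover have "?f z \<le> ?f 0" using zmin R0 by simp
      ultimately show ?thesis by simp
    qed
  qed
  have "Dfr M q r z = (\<lambda>v. 0)"
    by (rule differential_zero_maxmin[OF _ open_UNIV f_r_deriv[OF r]]) (use glob in auto)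
  then have "z \<in> stat_set M q r" using f_r_deriv[OF r, of M q z] by (simp add: stat_set_def)
  then show ?thesis using snrT_stat_imp_sol[OF r snrT] by blast
qed

definition pad :: "real^'n^'n \<Rightarrow> 'n set \<Rightarrow> real^'n^'n" where
  "pad A S = (\<chi> i j. if i \<in> S \<and> j \<in> S then A $ i $ j else (if i = j then 1 else 0))"

lemma det_pad: fixes A :: "real^'n^'n" shows "det (pad A S) = principal_minor A S"
proof -
  have fin: "finite {p. p permutes (UNIV::'n set)}" by (rule finite_permutations) simp
  have sub: "{p. p permutes S} \<subseteq> {p. p permutes (UNIV::'n set)}"
  proof clarify
    fix p assume "p permutes S"
    then show "p permutes UNIV" by (rule permutes_subset) simp
  qed
  have z: "of_int (sign p) * (\<Prod>i\<in>UNIV. pad A S $ i $ p i) = 0"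
    if p: "p \<in> {p. p permutes (UNIV::'n set)} - {p. p permutes S}" for p
  proof -
    have pU: "p permutes UNIV" and npS: "\<not> p permutes S" using p by auto
    have "\<exists>i. i \<notin> S \<and> p i \<noteq> i"
    proof (rule ccontr)
      assume "\<not> ?thesis"
      then have "\<forall>x. x \<notin> S \<longrightarrow> p x = x" by blast
      moreover have "\<forall>y. \<exists>!x. p x = y" using pU unfolding permutes_def by blast
      ultimately have "p permutes S" unfolding permutes_def by blast
      then show False using npS by blast
    qed
    then obtain i where "i \<notin> S" "p i \<noteq> i" by blast
    then have "pad A S $ i $ p i = 0" by (simp add: pad_def)
    then have "(\<Prod>i\<in>UNIV. pad A S $ i $ p i) = 0" by (intro prod_zero) auto
    then show ?thesis by simp
  qed
  have e: "(\<Prod>i\<in>UNIV. pad A S $ i $ p i) = (\<Prod>i\<in>S. A $ i $ p i)" if p: "p permutes S" for p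
  proof -
    have "(\<Prod>i\<in>UNIV. pad A S $ i $ p i) = (\<Prod>i\<in>S. pad A S $ i $ p i)"
      by (rule prod.mono_neutral_right) (auto simp: pad_def permutes_not_in[OF p])
    also have "\<dots> = (\<Prod>i\<in>S. A $ i $ p i)"
      by (rule prod.cong) (auto simp: pad_def permutes_in_image[OF p])
    finally show ?thesis .
  qed
  have "det (pad A S) = (\<Sum>p\<in>{p. p permutes (UNIV::'n set)}. of_int (sign p) * (\<Prod>i\<in>UNIV. pad A S $ i $ p i))"
    by (simp add: det_def)
  also have "\<dots> = (\<Sum>p\<in>{p. p permutes S}. of_int (sign p) * (\<Prod>i\<in>UNIV. pad A S $ i $ p i))"
    by (rule sum.mono_neutral_right[OF fin sub]) (use z in blast)
  also have "\<dots> = principal_minor A S"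
    unfolding principal_minor_def by (rule sum.cong) (auto simp: e)
  finally show ?thesis .
qed

lemma pad_transpose: "pad (transpose A) S = transpose (pad A S)"
  by (simp add: vec_eq_iff pad_def transpose_def)

lemma pm_transpose: "principal_minor (transpose A) S = principal_minor A S"
  by (metis det_pad pad_transpose det_transpose)

lemma P_transpose: "P_matrix M \<Longrightarrow> P_matrix (transpose M)"
  by (simp add: P_matrix_def pm_transpose)

lemma pm_empty: "principal_minor A {} = 1"
  by (simp add: principal_minor_def permutes_empty)

definition addE :: "real^'n^'n \<Rightarrow> 'n \<Rightarrow> real \<Rightarrow> real^'n^'n" where
  "addE A k d = (\<chi> i j. A $ i $ j + (if i = k \<and> j = k then d else 0))"

lemma permutes_remove_eq:
  assumes "k \<in> S"
  shows "{p. p permutes S \<and> p k = k} = {p. p permutes (S - {k})}"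
proof (intro set_eqI iffI)
  fix p assume "p \<in> {p. p permutes S \<and> p k = k}"
  then show "p \<in> {p. p permutes (S - {k})}" unfolding permutes_def by auto
next
  fix p assume "p \<in> {p. p permutes (S - {k})}"
  then have p: "p permutes (S - {k})" by simp
  show "p \<in> {p. p permutes S \<and> p k = k}"
    using permutes_subset[OF p] permutes_not_in[OF p] by auto
qed

lemma pm_addE:
  "principal_minor (addE A k d) S
     = principal_minor A S + (if k \<in> S then d * principal_minor A (S - {k}) else 0)"
proof (cases "k \<in> S")
  case False
  have "(\<Prod>i\<in>S. addE A k d $ i $ p i) = (\<Prod>i\<in>S. A $ i $ p i)" for p
    by (rule prod.cong) (use False in \<open>auto simp: addE_def\<close>)
  then show ?thesis using False by (simp add: principal_minor_def)
next
  case True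
  have fS: "finite S" by simp
  have finP: "finite {p. p permutes S}" by (rule finite_permutations[OF fS])
  have e: "of_int (sign p) * (\<Prod>i\<in>S. addE A k d $ i $ p i)
       = of_int (sign p) * (\<Prod>i\<in>S. A $ i $ p i)
         + (if p k = k then d * (of_int (sign p) * (\<Prod>i\<in>S - {k}. A $ i $ p i)) else 0)"
    if p: "p permutes S" for p
  proof -
    have r1: "(\<Prod>i\<in>S. addE A k d $ i $ p i) = addE A k d $ k $ p k * (\<Prod>i\<in>S - {k}. addE A k d $ i $ p i)"
      by (rule prod.remove[OF fS True])
    have r2: "(\<Prod>i\<in>S - {k}. addE A k d $ i $ p i) = (\<Prod>i\<in>S - {k}. A $ i $ p i)"
      by (rule prod.cong) (auto simp: addE_def)
    have r3: "(\<Prod>i\<in>S. A $ i $ p i) = A $ k $ p k * (\<Prod>i\<in>S - {k}. A $ i $ p i)"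
      by (rule prod.remove[OF fS True])
    show ?thesis unfolding r1 r2 r3 by (simp add: addE_def algebra_simps)
  qed
  have "principal_minor (addE A k d) S
      = (\<Sum>p\<in>{p. p permutes S}. of_int (sign p) * (\<Prod>i\<in>S. A $ i $ p i)
         + (if p k = k then d * (of_int (sign p) * (\<Prod>i\<in>S - {k}. A $ i $ p i)) else 0))"
    unfolding principal_minor_def by (rule sum.cong) (auto simp: e)
  also have "\<dots> = principal_minor A S
      + (\<Sum>p\<in>{p. p permutes S}. if p k = k then d * (of_int (sign p) * (\<Prod>i\<in>S - {k}. A $ i $ p i)) else 0)"
    by (simp add: sum.distrib principal_minor_def)
  also have "(\<Sum>p\<in>{p. p permutes S}. if p k = k then d * (of_int (sign p) * (\<Prod>i\<in>S - {k}. A $ i $ p i)) else 0)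
      = (\<Sum>p\<in>{p \<in> {p. p permutes S}. p k = k}. d * (of_int (sign p) * (\<Prod>i\<in>S - {k}. A $ i $ p i)))"
    by (rule sum.inter_filter[OF finP, symmetric])
  also have "{p \<in> {p. p permutes S}. p k = k} = {p. p permutes (S - {k})}"
    using permutes_remove_eq[OF True] by auto
  also have "(\<Sum>p\<in>{p. p permutes (S - {k})}. d * (of_int (sign p) * (\<Prod>i\<in>S - {k}. A $ i $ p i)))
      = d * principal_minor A (S - {k})"
    by (simp add: principal_minor_def sum_distrib_left)
  finally show ?thesis using True by simp
qed

definition addD :: "real^'n^'n \<Rightarrow> 'n set \<Rightarrow> ('n \<Rightarrow> real) \<Rightarrow> real^'n^'n" where
  "addD A K d = (\<chi> i j. A $ i $ j + (if i = j \<and> i \<in> K then d i else 0))"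

lemma addD_empty: "addD A {} d = A" by (simp add: addD_def vec_eq_iff)

lemma addD_insert: "k \<notin> K \<Longrightarrow> addD A (insert k K) d = addE (addD A K d) k (d k)"
  by (auto simp: addD_def addE_def vec_eq_iff)

lemma pm_addD_ge:
  assumes P: "P_matrix M" and d: "\<And>i. 0 \<le> d i" and K: "finite K"
  shows "\<forall>S. principal_minor M S \<le> principal_minor (addD M K d) S"
  using K
proof (induction K rule: finite_induct)
  case empty then show ?case by (simp add: addD_empty)
next
  case (insert k K)
  have Mnn: "0 \<le> principal_minor M T" for T
    using P by (cases "T = {}") (auto simp: P_matrix_def pm_empty less_imp_le)
  show ?case
  proof
    fix S
    have "0 \<le> principal_minor (addD M K d) (S - {k})"
      using insert.IH Mnn[of "S - {k}"] by (meson order_trans)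
    then have "0 \<le> (if k \<in> S then d k * principal_minor (addD M K d) (S - {k}) else 0)"
      using d[of k] by simp
    then show "principal_minor M S \<le> principal_minor (addD M (insert k K) d) S"
      unfolding addD_insert[OF insert.hyps(2)] pm_addE using insert.IH by (meson add_increasing2)
  qed
qed

lemma det_kernel:
  fixes A :: "real^'n^'n"
  assumes "det A \<noteq> 0" "A *v z = 0"
  shows "z = 0"
proof -
  obtain A' where "A' ** A = mat 1" using assms(1) invertible_det_nz invertible_def by blast
  then have "z = A' *v (A *v z)" by (simp add: matrix_vector_mul_assoc)
  then show ?thesis using assms(2) by simp
qed

lemma P_imp_snr:
  fixes M :: "real^'n^'n"
  assumes P: "P_matrix M"
  shows "snr M"
  unfolding snr_def
proof (intro allI impI)
  fix z :: "real^'n"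
  assume z: "z \<noteq> 0"
  show "\<exists>i. 0 < z $ i * (M *v z) $ i"
  proof (rule ccontr)
    assume "\<not> ?thesis"
    then have np: "\<And>i. z $ i * (M *v z) $ i \<le> 0" by (simp add: not_less)
    define S where "S = {i. z $ i \<noteq> 0}"
    have Sne: "S \<noteq> {}" using z by (auto simp: S_def vec_eq_iff)
    define d where "d i = (if z $ i \<noteq> 0 then - (M *v z) $ i / z $ i else 0)" for i
    have d0: "0 \<le> d i" for i
    proof (cases "z $ i = 0")
      case False
      have "- (M *v z) $ i / z $ i = - (z $ i * (M *v z) $ i) / (z $ i * z $ i)"
        using False by (simp add: field_simps)
      also have "\<dots> \<ge> 0"
      proof (rule divide_nonneg_pos)
        show "0 \<le> - (z $ i * (M *v z) $ i)" using np[of i] by simp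
        show "0 < z $ i * z $ i" using False by (metis not_real_square_gt_zero)
      qed
      finally show ?thesis using False by (simp add: d_def)
    qed (simp add: d_def)
    define A where "A = addD M UNIV d"
    have kz: "pad A S *v z = 0"
    proof (subst vec_eq_iff, intro allI)
      fix i
      show "(pad A S *v z) $ i = 0 $ i"
      proof (cases "i \<in> S")
        case True
        have "(pad A S *v z) $ i = (\<Sum>j\<in>UNIV. (if j \<in> S then A $ i $ j else 0) * z $ j)"
          using True by (auto simp: matrix_vector_mult_def pad_def intro!: sum.cong)
        also have "\<dots> = (\<Sum>j\<in>UNIV. A $ i $ j * z $ j)"
          by (rule sum.cong) (auto simp: S_def)
        also have "\<dots> = (\<Sum>j\<in>UNIV. M $ i $ j * z $ j) + (\<Sum>j\<in>UNIV. (if i = j then d i else 0) * z $ j)"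
          by (simp add: A_def addD_def algebra_simps sum.distrib)
        also have "\<dots> = (M *v z) $ i + d i * z $ i"
        proof -
          have "(\<Sum>j\<in>UNIV. (if i = j then d i else 0) * z $ j) = (\<Sum>j\<in>UNIV. if i = j then d i * z $ j else 0)"
            by (rule sum.cong) auto
          also have "\<dots> = d i * z $ i" by simp
          finally show ?thesis by (simp add: matrix_vector_mult_def)
        qed
        also have "\<dots> = 0" using True by (simp add: d_def S_def)
        finally show ?thesis by simp
      next
        case False
        have "(pad A S *v z) $ i = (\<Sum>j\<in>UNIV. (if i = j then 1 else 0) * z $ j)"
          using False by (simp add: matrix_vector_mult_def pad_def)
        also have "\<dots> = (\<Sum>j\<in>UNIV. if i = j then z $ j else 0)" by (rule sum.cong) auto
        also have "\<dots> = z $ i" by simp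
        finally show ?thesis using False by (simp add: S_def)
      qed
    qed
    moreover have dp: "det (pad A S) > 0"
    proof -
      have "principal_minor M S \<le> principal_minor A S"
        using pm_addD_ge[OF P d0, of UNIV] by (simp add: A_def)
      moreover have "0 < principal_minor M S" using P Sne by (simp add: P_matrix_def)
      ultimately show ?thesis by (simp add: det_pad)
    qed
    have "det (pad A S) \<noteq> 0" using dp by linarith
    then have "z = 0" using det_kernel kz by blast
    then show False using z by simp
  qed
qed

definition Dg :: "'n set \<Rightarrow> real^'n^'n" where
  "Dg S = (\<chi> i j. if i = j \<and> i \<in> S then 1 else 0)"

lemma Dg_nth: "(Dg S *v w) $ i = (if i \<in> S then w $ i else 0)"
proof -
  have "(Dg S *v w) $ i = (\<Sum>j\<in>UNIV. if i = j then (if i \<in> S then w $ j else 0) else 0)"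
    unfolding matrix_vector_mult_def Dg_def vec_lambda_beta by (rule sum.cong) auto
  also have "\<dots> = (if i \<in> S then w $ i else 0)" by simp
  finally show ?thesis .
qed

definition LM :: "real^'n^'n \<Rightarrow> 'n set \<Rightarrow> real^'n^'n" where
  "LM M S = Dg (- S) - M ** Dg S"

definition Orth :: "(real^'n) set" where
  "Orth = {w. \<forall>i. 0 \<le> w $ i}"

lemma Orth_hull: "Orth = convex_cone hull (range (\<lambda>i. axis i (1::real)) :: (real^'n) set)"
proof
  show "convex_cone hull (range (\<lambda>i. axis i (1::real)) :: (real^'n) set) \<subseteq> Orth"
  proof (rule hull_minimal)
    show "range (\<lambda>i. axis i (1::real)) \<subseteq> (Orth :: (real^'n) set)"
      by (auto simp: Orth_def axis_def)
    show "convex_cone (Orth :: (real^'n) set)"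
      unfolding convex_cone_iff Orth_def by auto
  qed
next
  show "Orth \<subseteq> convex_cone hull (range (\<lambda>i. axis i (1::real)) :: (real^'n) set)"
  proof
    fix w :: "real^'n" assume w: "w \<in> Orth"
    have "\<And>F. finite F \<Longrightarrow> (\<Sum>i\<in>F. w $ i *\<^sub>R axis i (1::real)) \<in> convex_cone hull (range (\<lambda>i. axis i (1::real)))"
    proof -
      fix F :: "'n set" assume "finite F"
      then show "(\<Sum>i\<in>F. w $ i *\<^sub>R axis i (1::real)) \<in> convex_cone hull (range (\<lambda>i. axis i (1::real)))"
      proof (induction F rule: finite_induct)
        case empty then show ?case by (simp add: convex_cone_hull_contains_0)
      next
        case (insert k F)
        have "w $ k *\<^sub>R axis k (1::real) \<in> convex_cone hull (range (\<lambda>i. axis i (1::real)))"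
          using w by (intro convex_cone_hull_mul hull_inc) (auto simp: Orth_def)
        then show ?case using insert by (simp add: convex_cone_hull_add)
      qed
    qed
    from this[of UNIV] show "w \<in> convex_cone hull (range (\<lambda>i. axis i (1::real)))"
      using basis_expansion[of w] by (simp add: scalar_mult_eq_scaleR)
  qed
qed

lemma closed_LM_Orth: "closed ((\<lambda>w. LM M S *v w) ` Orth)"
proof -
  have "(\<lambda>w. LM M S *v w) ` Orth = convex_cone hull ((\<lambda>w. LM M S *v w) ` range (\<lambda>i. axis i (1::real)))"
    unfolding Orth_hull by (rule convex_cone_hull_linear_image[symmetric]) (rule matrix_vector_mul_linear)
  moreover have "closed (convex_cone hull ((\<lambda>w. LM M S *v w) ` range (\<lambda>i. axis i (1::real))))"
    by (rule closed_convex_cone_hull) simp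
  ultimately show ?thesis by simp
qed

definition Cset :: "real^'n^'n \<Rightarrow> (real^'n) set" where
  "Cset M = (\<Union>S\<in>UNIV. (\<lambda>w. LM M S *v w) ` Orth)"

lemma closed_Cset: "closed (Cset M)"
  unfolding Cset_def by (intro closed_UN) (auto simp: closed_LM_Orth)

lemma LM_apply: "LM M S *v w = Dg (- S) *v w - M *v (Dg S *v w)"
  by (simp add: LM_def matrix_vector_mult_diff_rdistrib matrix_vector_mul_assoc)

lemma Cset_sol:
  assumes "q \<in> Cset M"
  shows "\<exists>z. z \<in> lcp_sol M q"
proof -
  obtain S w where w: "w \<in> Orth" and q: "q = LM M S *v w" using assms unfolding Cset_def by blast
  define z where "z = Dg S *v w"
  have e: "M *v z + q = Dg (- S) *v w" unfolding q LM_apply z_def by simp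
  have "z \<in> lcp_sol M q"
    unfolding sol_char e using w by (auto simp: z_def Dg_nth Orth_def)
  then show ?thesis by blast
qed

lemma reg_mat:
  fixes M :: "real^'n^'n" and e :: real
  shows "(M + e *\<^sub>R mat 1) *v x = M *v x + e *\<^sub>R x"
proof -
  have "(e *\<^sub>R (mat 1 :: real^'n^'n)) *v x = e *\<^sub>R x"
    using scaleR_matrix_vector_assoc[of e "mat 1 :: real^'n^'n" x, symmetric] by simp
  then show ?thesis by (simp add: matrix_vector_mult_add_rdistrib)
qed

lemma reg_in_Cset:
  assumes x: "x \<in> lcp_sol (M + e *\<^sub>R mat 1) q"
  shows "q + e *\<^sub>R x \<in> Cset M"
proof -
  define y where "y = M *v x + e *\<^sub>R x + q"
  have c: "0 \<le> x $ i" "0 \<le> y $ i" "x $ i * y $ i = 0" for i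
    using x unfolding sol_char reg_mat y_def by auto
  define S where "S = {i. x $ i \<noteq> 0}"
  define w where "w = x + y"
  have wO: "w \<in> Orth" using c by (auto simp: Orth_def w_def)
  have y0: "x $ i \<noteq> 0 \<Longrightarrow> y $ i = 0" for i using c(3)[of i] by simp
  have d1: "Dg S *v w = x"
    unfolding vec_eq_iff Dg_nth w_def S_def using y0 by auto
  have d2: "Dg (- S) *v w = y"
    unfolding vec_eq_iff Dg_nth w_def S_def using y0 by auto
  have "LM M S *v w = y - M *v x" unfolding LM_apply d1 d2 ..
  also have "\<dots> = q + e *\<^sub>R x" unfolding y_def by (simp add: algebra_simps)
  finally have L: "LM M S *v w = q + e *\<^sub>R x" .
  have "q + e *\<^sub>R x \<in> (\<lambda>w. LM M S *v w) ` Orth"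
    by (rule image_eqI[where x=w]) (simp_all add: L wO)
  then show ?thesis unfolding Cset_def by (rule UN_I[rotated]) simp
qed

lemma posdef_snr:
  fixes A :: "real^'n^'n"
  assumes pd: "\<And>z. z \<noteq> 0 \<Longrightarrow> 0 < z \<bullet> (A *v z)"
  shows "snr A"
  unfolding snr_def
proof (intro allI impI)
  fix z :: "real^'n" assume z: "z \<noteq> 0"
  show "\<exists>i. 0 < z $ i * (A *v z) $ i"
  proof (rule ccontr)
    assume "\<not> ?thesis"
    then have "\<And>i. z $ i * (A *v z) $ i \<le> 0" by (simp add: not_less)
    then have "z \<bullet> (A *v z) \<le> 0" unfolding inner_vec_def by (simp add: sum_nonpos)
    then show False using pd[OF z] by simp
  qed
qed

lemma nonneg_inner:
  fixes a b :: "real^'n"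
  assumes "\<And>i. 0 \<le> a $ i" "\<And>i. 0 \<le> b $ i"
  shows "0 \<le> a \<bullet> b"
  unfolding inner_vec_def using assms by (simp add: sum_nonneg)

lemma transpose_reg:
  fixes M :: "real^'n^'n"
  shows "transpose (M + e *\<^sub>R mat 1) = transpose M + e *\<^sub>R mat 1"
  by (simp add: vec_eq_iff transpose_def mat_def)

lemma inner_transpose:
  fixes M :: "real^'n^'n"
  shows "z \<bullet> (transpose M *v z) = z \<bullet> (M *v z)"
  by (metis dot_lmul_matrix inner_commute transpose_matrix_vector)

lemma reg_pd:
  fixes M :: "real^'n^'n"
  assumes psd: "\<And>z. 0 \<le> z \<bullet> (M *v z)" and e: "e > 0" and z: "z \<noteq> 0"
  shows "0 < z \<bullet> ((M + e *\<^sub>R mat 1) *v z)"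
proof -
  have "z \<bullet> ((M + e *\<^sub>R mat 1) *v z) = z \<bullet> (M *v z) + e * (z \<bullet> z)"
    by (simp add: reg_mat inner_add_right)
  moreover have "0 < z \<bullet> z" using z by simp
  ultimately show ?thesis using psd[of z] e by (simp add: add_nonneg_pos)
qed

lemma reg_bound:
  fixes M :: "real^'n^'n"
  assumes psd: "psd_matrix M" and e: "e > 0"
    and x: "x \<in> lcp_sol (M + e *\<^sub>R mat 1) q" and u: "u \<in> lcp_fea M q"
  shows "e * (norm (x - u))\<^sup>2 \<le> u \<bullet> (M *v u + q) + e * (norm u)\<^sup>2"
proof -
  define y where "y = M *v x + e *\<^sub>R x + q"
  define v where "v = M *v u + q"
  define d where "d = x - u"
  have x0: "\<And>i. 0 \<le> x $ i" and y0: "\<And>i. 0 \<le> y $ i" and xy: "x \<bullet> y = 0"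
    using x unfolding lcp_sol_def reg_mat y_def by auto
  have u0: "\<And>i. 0 \<le> u $ i" and v0: "\<And>i. 0 \<le> v $ i" using u unfolding lcp_fea_def v_def by auto
  have Md: "(M + e *\<^sub>R mat 1) *v d = y - v - e *\<^sub>R u"
    unfolding reg_mat by (simp add: d_def y_def v_def matrix_vector_mult_diff_distrib algebra_simps)
  have "d \<bullet> ((M + e *\<^sub>R mat 1) *v d) = d \<bullet> (M *v d) + e * (d \<bullet> d)"
    by (simp add: reg_mat inner_add_right)
  moreover have "0 \<le> d \<bullet> (M *v d)" using psd by (simp add: psd_matrix_def)
  ultimately have lo: "e * (d \<bullet> d) \<le> d \<bullet> ((M + e *\<^sub>R mat 1) *v d)" by simp
  have "d \<bullet> ((M + e *\<^sub>R mat 1) *v d)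
      = x \<bullet> y - x \<bullet> v - e * (x \<bullet> u) - u \<bullet> y + u \<bullet> v + e * (u \<bullet> u)"
    unfolding Md by (simp add: d_def inner_diff_left inner_diff_right inner_commute algebra_simps)
  moreover have "0 \<le> x \<bullet> v" "0 \<le> x \<bullet> u" "0 \<le> u \<bullet> y"
    using x0 u0 v0 y0 by (simp_all add: nonneg_inner)
  ultimately have "d \<bullet> ((M + e *\<^sub>R mat 1) *v d) \<le> u \<bullet> v + e * (u \<bullet> u)"
    using xy e by (smt (verit) mult_nonneg_nonneg)
  with lo have "e * (d \<bullet> d) \<le> u \<bullet> v + e * (u \<bullet> u)" by linarith
  then show ?thesis by (simp add: d_def v_def power2_norm_eq_inner)
qed

lemma psd_exists:
  fixes M :: "real^'n^'n" and r :: real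
  assumes r: "r > 1" and psd: "psd_matrix M" and u: "u \<in> lcp_fea M q"
  shows "\<exists>x. x \<in> lcp_sol M q"
proof -
  define v where "v = M *v u + q"
  define K0 where "K0 = u \<bullet> v + (norm u)\<^sup>2"
  have u0: "\<And>i. 0 \<le> u $ i" and v0: "\<And>i. 0 \<le> v $ i" using u unfolding lcp_fea_def v_def by auto
  have K0: "0 \<le> K0" unfolding K0_def using nonneg_inner[OF u0 v0] by simp
  have psd': "\<And>z. 0 \<le> z \<bullet> (M *v z)" using psd by (simp add: psd_matrix_def)
  have psdT: "\<And>z. 0 \<le> z \<bullet> (transpose M *v z)"
    using psd' inner_transpose by metis
  have "q \<in> closure (Cset M)"
    unfolding closure_approachable
  proof (intro allI impI)
    fix e :: real assume e: "0 < e"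
    define eps where "eps = min 1 (min (e / (2 * (norm u + 1))) (e\<^sup>2 / (4 * (K0 + 1))))"
    have "0 < norm u + 1" by (smt (verit) norm_ge_zero)
    then have "0 < e / (2 * (norm u + 1))" using e by simp
    moreover have "0 < e\<^sup>2 / (4 * (K0 + 1))" using e K0 by simp
    ultimately have eps0: "0 < eps" by (simp add: eps_def)
    have eps1: "eps \<le> 1" by (simp add: eps_def)
    have eps2: "eps \<le> e / (2 * (norm u + 1))" by (simp add: eps_def)
    have eps3: "eps \<le> e\<^sup>2 / (4 * (K0 + 1))" by (simp add: eps_def)
    let ?Me = "M + eps *\<^sub>R mat 1"
    have s1: "snr ?Me" by (rule posdef_snr) (rule reg_pd[OF psd' eps0])
    have s2: "snr (transpose ?Me)"
      unfolding transpose_reg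
      by (rule posdef_snr) (rule reg_pd[OF psdT eps0])
    obtain x where x: "x \<in> lcp_sol ?Me q" using snr_exists[OF r s1 s2] by blast
    have B: "eps * (norm (x - u))\<^sup>2 \<le> u \<bullet> v + eps * (norm u)\<^sup>2"
      using reg_bound[OF psd eps0 x u] by (simp add: v_def)
    define nd where "nd = norm (x - u)"
    define nu where "nu = norm u"
    have nu0: "0 \<le> nu" by (simp add: nu_def)
    have "eps * nu \<le> e / (2 * (nu + 1)) * nu"
      using eps2 nu0 by (intro mult_right_mono) (simp_all add: nu_def)
    also have "\<dots> < e / 2" using e nu0 by (simp add: field_simps)
    finally have h1: "eps * nu < e / 2" .
    have "eps * nu\<^sup>2 \<le> 1 * nu\<^sup>2" using eps1 by (intro mult_right_mono) auto
    then have "eps * nd\<^sup>2 \<le> K0" using B unfolding K0_def nd_def nu_def by linarith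
    then have "eps * (eps * nd\<^sup>2) \<le> eps * K0" using eps0 by (intro mult_left_mono) auto
    also have "\<dots> \<le> e\<^sup>2 / (4 * (K0 + 1)) * K0" using eps3 K0 by (intro mult_right_mono) auto
    also have "\<dots> < (e / 2)\<^sup>2" using e K0 by (simp add: field_simps power2_eq_square)
    finally have "(eps * nd)\<^sup>2 < (e / 2)\<^sup>2" by (simp add: power2_eq_square algebra_simps)
    then have h2: "eps * nd < e / 2" by (rule power2_less_imp_less) (use e in simp)
    have "norm x \<le> nu + nd" unfolding nu_def nd_def by (metis norm_triangle_sub add.commute)
    then have "eps * norm x \<le> eps * (nu + nd)" using eps0 by (intro mult_left_mono) auto
    then have "eps * norm x \<le> eps * nu + eps * nd" by (simp add: distrib_left)
    then have "dist (q + eps *\<^sub>R x) q < e" using h1 h2 eps0 by (simp add: dist_norm)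
    moreover have "q + eps *\<^sub>R x \<in> Cset M" by (rule reg_in_Cset[OF x])
    ultimately show "\<exists>y\<in>Cset M. dist y q < e" by blast
  qed
  then have "q \<in> Cset M" using closed_Cset closure_closed by metis
  then show ?thesis by (rule Cset_sol)
qed

theorem theorem3p2:
  fixes M :: "real^'n^'n" and q :: "real^'n" and r :: real
  assumes "r \<ge> 2"
  shows "(psd_matrix M \<and> lcp_fea M q \<noteq> {} \<longrightarrow>
            lcp_sol M q = stat_set M q r \<and> lcp_sol M q \<noteq> {})
       \<and> (P_matrix M \<longrightarrow>
            (\<exists>xs. lcp_sol M q = {xs} \<and> stat_set M q r = {xs}))"
proof -
  have r: "r > 1" using assms by simp
  have A: "lcp_sol M q = stat_set M q r \<and> lcp_sol M q \<noteq> {}"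
    if h: "psd_matrix M \<and> lcp_fea M q \<noteq> {}"
  proof -
    obtain u where u: "u \<in> lcp_fea M q" using h by blast
    have "lcp_sol M q = stat_set M q r"
      using sol_imp_stat[OF r] psd_stat_imp_sol[OF r _ u] h by blast
    moreover have "lcp_sol M q \<noteq> {}" using psd_exists[OF r _ u] h by blast
    ultimately show ?thesis by blast
  qed
  have B: "\<exists>xs. lcp_sol M q = {xs} \<and> stat_set M q r = {xs}" if P: "P_matrix M"
  proof -
    have s1: "snr M" by (rule P_imp_snr[OF P])
    have s2: "snr (transpose M)" by (rule P_imp_snr[OF P_transpose[OF P]])
    obtain xs where xs: "xs \<in> lcp_sol M q" using snr_exists[OF r s1 s2] by blast
    have sol: "lcp_sol M q = {xs}" using xs snr_unique[OF s1] by blast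
    have "stat_set M q r = lcp_sol M q"
      using sol_imp_stat[OF r] snrT_stat_imp_sol[OF r s2] by blast
    then show ?thesis using sol by blast
  qed
  show ?thesis using A B by blast
qed

end
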